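(* Let $\widetilde E$ be an elliptic curve over $\mathbb{F}_q(T)$ given by a minimal Weierstrass equation $y^2=x^3+B$. If $P$ is a prime of good reduction for $\widetilde E$, then (1) $a^*_{1,P}=-(\lambda_P+\overline\lambda_P)$; (2) $a^*_{1,P^2}=\lambda_P^2+\overline\lambda_P^2+2(|\lambda_P|^2-1)$; (3) $a^*_{1,P^3}=-(\lambda_P^3+\overline\lambda_P^3)-3(|\lambda_P|^2-1)(\lambda_P+\overline\lambda_P)$.
   Context: Fix a prime $p\neq2,3$ and $q=p^r$ with $q\equiv1\pmod6$; primes are monic irreducible polynomials in $\mathbb{F}_q[T]$. Let $\Delta$ be the discriminant of $\widetilde E$; $a_P$ is defined by $\#\widetilde E(P)=q^{\deg P}+1-a_Pq^{\deg P/2}$ ($\#\widetilde E(P)$ = number of $\mathbb{F}_{q^{\deg P}}$-points on the nonsingular locus of the reduction). $L(u,\widetilde E)=\prod_{P\mid\Delta}(1-a_Pu^{\deg P})^{-1}\prod_{P\nmid\Delta}(1-a_Pu^{\deg P}+u^{2\deg P})^{-1}$ and $a^*_{1,P^k}$ are defined by $\frac{L'(u,\widetilde E)}{L(u,\widetilde E)}=\frac1u\sum_P\deg P\sum_{k\ge1}a^*_{1,P^k}u^{k\deg P}$. $(\frac{\cdot}{P})_3$ is the cubic residue symbol modulo $P$, and $\lambda_P=q^{-\deg P/2}\sum_{F\bmod P}\big(\frac{F^2-B}{P}\big)_3$. *)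

theory Defs
  imports "HOL-Analysis.Analysis" "HOL-Computational_Algebra.Computational_Algebra"
begin

text \<open>Ambient finite field F_q is a type 'a :: {finite, field}; q = CARD('a).
  Polynomials in F_q[T] are 'a poly.  Primes are monic irreducible polynomials.\<close>

definition prime_poly :: "'a::field poly \<Rightarrow> bool" where
  "prime_poly P \<longleftrightarrow> irreducible P \<and> lead_coeff P = 1"

text \<open>Discriminant of y^2 = x^3 + B: -16 (4 * 0^3 + 27 B^2) = -432 B^2.\<close>
definition disc_short :: "'a::field poly \<Rightarrow> 'a poly" where
  "disc_short B = smult (- 432) (B ^ 2)"

text \<open>Minimal (integral) Weierstrass equation y^2 = x^3 + B, B in F_q[T], p <> 2,3:
  nonsingular (discriminant nonzero) and minimal at every prime P, which for
  a model with c4 = 0 means v_P(Delta) < 12, i.e. P^6 does not divide B.\<close>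
definition minimal_weierstrass_short :: "'a::field poly \<Rightarrow> bool" where
  "minimal_weierstrass_short B \<longleftrightarrow>
     disc_short B \<noteq> 0 \<and> (\<forall>P. prime_poly P \<longrightarrow> \<not> P ^ 6 dvd B)"

definition good_reduction :: "'a::field poly \<Rightarrow> 'a poly \<Rightarrow> bool" where
  "good_reduction B P \<longleftrightarrow> \<not> P dvd disc_short B"

text \<open>Residue field F_q[T]/P represented by the polynomials of degree < deg P.\<close>
definition residues_mod :: "'a::field poly \<Rightarrow> 'a poly set" where
  "residues_mod P = {F. degree F < degree P}"

text \<open>Number of points (over F_q[T]/P = F_{q^deg P}) on the nonsingular locus of
  the reduction mod P of y^2 = x^3 + B: nonsingular affine points plus the
  point at infinity (which is always nonsingular).\<close>
definition num_points_red :: "'a::field poly \<Rightarrow> 'a poly \<Rightarrow> nat" where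
  "num_points_red B P =
     card {(x, y). x \<in> residues_mod P \<and> y \<in> residues_mod P \<and>
                   (y ^ 2 - x ^ 3 - B) mod P = 0 \<and>
                   \<not> ((smult 2 y) mod P = 0 \<and> (smult (-3) (x ^ 2)) mod P = 0)} + 1"

definition a_coeff :: "'a::{finite,field} poly \<Rightarrow> 'a poly \<Rightarrow> real" where
  "a_coeff B P =
     (real CARD('a) ^ degree P + 1 - real (num_points_red B P))
       / (sqrt (real CARD('a)) ^ degree P)"

definition L_local :: "'a::{finite,field} poly \<Rightarrow> 'a poly \<Rightarrow> real fps" where
  "L_local B P =
     (let d = degree P; a = a_coeff B P in
      if P dvd disc_short B then inverse (1 - fps_const a * fps_X ^ d)
      else inverse (1 - fps_const a * fps_X ^ d + fps_X ^ (2 * d)))"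

text \<open>a*_{1,P^k}: the contribution of P to L'/L = (1/u) sum_P deg P sum_k a*_{1,P^k} u^(k deg P),
  i.e. (coefficient of u^(k deg P - 1) in the logarithmic derivative of the local factor)/deg P.\<close>
definition a_star :: "'a::{finite,field} poly \<Rightarrow> 'a poly \<Rightarrow> nat \<Rightarrow> real" where
  "a_star B P k =
     fps_nth (fps_deriv (L_local B P) * inverse (L_local B P)) (k * degree P - 1)
       / real (degree P)"

text \<open>Cubic residue symbol (F/P)_3 in mu_3(F_q), transported to C via the embedding
  sending the fixed primitive cube root of unity zeta in F_q to exp(2 pi i / 3).
  (F/P)_3 = 0 if P | F, otherwise the cube root of unity congruent to
  F^((q^deg P - 1)/3) mod P.\<close>
definition cubic_sym :: "'a::{finite,field} \<Rightarrow> 'a poly \<Rightarrow> 'a poly \<Rightarrow> complex" where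
  "cubic_sym \<zeta> P F =
     (if P dvd F then 0
      else (THE w. \<exists>j<(3::nat). w = cis (2 * pi / 3) ^ j \<and>
              F ^ ((CARD('a) ^ degree P - 1) div 3) mod P = [:\<zeta> ^ j:]))"

definition lambda_P :: "'a::{finite,field} \<Rightarrow> 'a poly \<Rightarrow> 'a poly \<Rightarrow> complex" where
  "lambda_P \<zeta> B P =
     complex_of_real (1 / sqrt (real CARD('a)) ^ degree P) *
       (\<Sum>F\<in>residues_mod P. cubic_sym \<zeta> P (F ^ 2 - B))"

end

theory Submission
  imports Defs "HOL-Algebra.Multiplicative_Group"
begin

lemma fps_part:
  fixes a :: real and d :: nat
  assumes d: "d \<ge> 1"
  defines "f \<equiv> 1 - fps_const a * fps_X ^ d + fps_X ^ (2 * d)"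
  defines "h \<equiv> fps_deriv (inverse f) * inverse (inverse f)"
  shows "h $ (d - 1) = a * d" "h $ (2*d - 1) = (a^2 - 2) * d" "h $ (3*d - 1) = (a^3 - 3*a) * d"
proof -
  have f0: "f $ 0 = 1" using d by (simp add: f_def)
  have fn: "f $ n = (if n = 0 then 1 else 0) - (if n = d then a else 0) + (if n = 2*d then 1 else 0)" for n
    using d by (simp add: f_def fps_X_power_iff)
  have "h = - fps_deriv f * inverse f"
    unfolding h_def using f0
    by (simp add: fps_inverse_deriv fps_inverse_idempotent power2_eq_square
        inverse_mult_eq_1 mult.assoc)
  hence hf: "h * f = - fps_deriv f" using f0 by (simp add: mult.assoc inverse_mult_eq_1)
  have "h * f = h - fps_const a * (fps_X ^ d * h) + fps_X ^ (2*d) * h"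
    by (simp add: f_def algebra_simps)
  hence "h = - fps_deriv f + fps_const a * (fps_X ^ d * h) - fps_X ^ (2*d) * h"
    using hf by (simp add: algebra_simps)
  hence hn: "h $ n = - (of_nat (n+1) * f $ (n+1)) + a * (if d \<le> n then h $ (n - d) else 0)
      - (if 2*d \<le> n then h $ (n - 2*d) else 0)" for n
  proof -
    assume e: "h = - fps_deriv f + fps_const a * (fps_X ^ d * h) - fps_X ^ (2*d) * h"
    have "h $ n = (- fps_deriv f + fps_const a * (fps_X ^ d * h) - fps_X ^ (2*d) * h) $ n"
      using e by (rule arg_cong)
    thus ?thesis by (simp only: fps_sub_nth fps_add_nth fps_neg_nth fps_mult_left_const_nth
       fps_X_power_mult_nth fps_deriv_nth) (simp add: algebra_simps)
  qed
  show 1: "h $ (d - 1) = a * d"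
    using hn[of "d-1"] fn[of d] d by (simp add: of_nat_diff)
  have i2: "2*d-1-d = d-1" "\<not> 2*d \<le> 2*d-1" "d \<le> 2*d-1" "2*d-1+1 = 2*d" using d by auto
  show 2: "h $ (2*d - 1) = (a^2 - 2) * d"
    using hn[of "2*d-1"] fn[of "2*d"] d 1 i2 by (simp only: i2 if_True if_False) (simp add: of_nat_diff power2_eq_square algebra_simps)
  have i3: "3*d-1-d = 2*d-1" "3*d-1-2*d = d-1" "2*d \<le> 3*d-1" "d \<le> 3*d-1" "3*d-1+1 = 3*d" using d by auto
  show "h $ (3*d - 1) = (a^3 - 3*a) * d"
    using hn[of "3*d-1"] fn[of "3*d"] d 1 2 i3 by (simp only: i3 if_True if_False) (simp add: of_nat_diff power2_eq_square power3_eq_cube algebra_simps)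
qed

definition resring :: "'a::field poly \<Rightarrow> 'a poly ring" where
  "resring P = \<lparr>carrier = {F. degree F < degree P}, monoid.mult = (\<lambda>x y. (x * y) mod P),
     one = 1, zero = 0, add = (+)\<rparr>"

lemma card_deg_less:
  assumes "n \<ge> 1"
  shows "finite {p::'a::{finite,zero} poly. degree p < n} \<and> card {p::'a poly. degree p < n} = CARD('a)^n"
  using assms
proof (induction n rule: dec_induct)
  case base
  have e: "{p::'a poly. degree p < 1} = range (\<lambda>c. [:c:])"
    by (auto elim!: degree_eq_zeroE)
  have "inj (\<lambda>c::'a. [:c:])" by (auto simp: inj_on_def)
  thus ?case unfolding e by (simp add: card_image)
next
  case (step n)
  have e: "{p::'a poly. degree p < Suc n} = (\<lambda>(c,p). pCons c p) ` (UNIV \<times> {p. degree p < n})"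
  proof (intro Set.set_eqI iffI)
    fix p :: "'a poly" assume "p \<in> {p. degree p < Suc n}"
    moreover obtain a q where "p = pCons a q" by (cases p)
    ultimately show "p \<in> (\<lambda>(c,p). pCons c p) ` (UNIV \<times> {p. degree p < n})"
      using step.hyps by (cases "q = 0") (auto simp: image_iff)
  next
    fix p :: "'a poly" assume "p \<in> (\<lambda>(c,p). pCons c p) ` (UNIV \<times> {p. degree p < n})"
    thus "p \<in> {p. degree p < Suc n}" by (auto simp: degree_pCons_eq_if)
  qed
  have "inj_on (\<lambda>(c,p). pCons c p) (UNIV \<times> {p::'a poly. degree p < n})"
    by (auto simp: inj_on_def)
  thus ?case using step.IH by (simp add: e card_image card_cartesian_product)
qed

lemma prime_poly_facts:
  fixes P :: "'a::field poly"
  assumes "prime_poly P"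
  shows "prime_elem P" "degree P \<ge> 1" "P \<noteq> 0"
proof -
  have irr: "irreducible P" using assms by (simp add: prime_poly_def)
  show "prime_elem P" using irr by (rule field_poly_irreducible_imp_prime)
  show "P \<noteq> 0" using irr by auto
  show "degree P \<ge> 1" using irr
    by (metis irreducible_def is_unit_iff_degree less_one not_less)
qed

lemma res_mod_self:
  fixes P x :: "'a::field poly"
  assumes "degree x < degree P"
  shows "x mod P = x"
  using assms by (simp add: mod_poly_less)

lemma res_dvd_zero:
  fixes P x :: "'a::field poly"
  assumes "degree x < degree P" "P dvd x"
  shows "x = 0"
  using assms by (metis dvd_imp_degree_le not_less)

lemma field_resring:
  fixes P :: "'a::{finite,field} poly"
  assumes P: "prime_poly P"
  shows "field (resring P)"
proof -
  note pf = prime_poly_facts[OF P]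
  let ?R = "resring P"
  have carr: "carrier ?R = {F. degree F < degree P}" by (simp add: resring_def)
  have [simp]: "x \<otimes>\<^bsub>?R\<^esub> y = (x * y) mod P" for x y by (simp add: resring_def)
  have [simp]: "x \<oplus>\<^bsub>?R\<^esub> y = x + y" for x y by (simp add: resring_def)
  have [simp]: "\<one>\<^bsub>?R\<^esub> = 1" "\<zero>\<^bsub>?R\<^esub> = 0" by (simp_all add: resring_def)
  have degmod: "degree (x mod P) < degree P" for x :: "'a poly"
    using pf degree_mod_less[of P x] by (cases "x mod P = 0") auto
  have ag: "abelian_group ?R"
  proof (rule abelian_groupI)
    fix x assume "x \<in> carrier ?R"
    hence "- x \<in> carrier ?R" "- x \<oplus>\<^bsub>?R\<^esub> x = \<zero>\<^bsub>?R\<^esub>" by (simp_all add: carr)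
    thus "\<exists>y\<in>carrier ?R. y \<oplus>\<^bsub>?R\<^esub> x = \<zero>\<^bsub>?R\<^esub>" by blast
  qed (use pf in \<open>auto simp: carr degree_add_less\<close>)
  have cm: "comm_monoid ?R"
  proof (rule comm_monoidI)
    fix x y z assume "x \<in> carrier ?R" "y \<in> carrier ?R" "z \<in> carrier ?R"
    have "(x * y mod P) * z mod P = (x * y * z) mod P" by (rule mod_mult_left_eq)
    also have "\<dots> = (x * (y * z mod P)) mod P" by (simp add: mod_mult_right_eq mult.assoc)
    finally show "x \<otimes>\<^bsub>?R\<^esub> y \<otimes>\<^bsub>?R\<^esub> z = x \<otimes>\<^bsub>?R\<^esub> (y \<otimes>\<^bsub>?R\<^esub> z)" by simp
  next
    fix x assume "x \<in> carrier ?R"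
    thus "\<one>\<^bsub>?R\<^esub> \<otimes>\<^bsub>?R\<^esub> x = x" by (simp add: carr res_mod_self)
  next
    fix x y assume "x \<in> carrier ?R" "y \<in> carrier ?R"
    show "x \<otimes>\<^bsub>?R\<^esub> y = y \<otimes>\<^bsub>?R\<^esub> x" by (simp add: mult.commute)
  next
    fix x y assume "x \<in> carrier ?R" "y \<in> carrier ?R"
    show "x \<otimes>\<^bsub>?R\<^esub> y \<in> carrier ?R" using degmod by (simp add: carr)
  next
    show "\<one>\<^bsub>?R\<^esub> \<in> carrier ?R" using pf by (simp add: carr)
  qed
  have cr: "cring ?R"
  proof (rule cringI[OF ag cm])
    fix x y z
    show "(x \<oplus>\<^bsub>?R\<^esub> y) \<otimes>\<^bsub>?R\<^esub> z = x \<otimes>\<^bsub>?R\<^esub> z \<oplus>\<^bsub>?R\<^esub> y \<otimes>\<^bsub>?R\<^esub> z"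
      by (simp add: distrib_right poly_mod_add_left)
  qed
  show ?thesis
  proof (rule cring.field_intro2[OF cr])
    show "\<zero>\<^bsub>?R\<^esub> \<noteq> \<one>\<^bsub>?R\<^esub>" by simp
  next
    fix x assume x: "x \<in> carrier ?R - {\<zero>\<^bsub>?R\<^esub>}"
    hence xd: "degree x < degree P" "x \<noteq> 0" by (auto simp: carr)
    have "finite {p::'a poly. degree p < degree P}" using card_deg_less[OF pf(2)] by blast
    hence fin: "finite (carrier ?R)" using carr by simp
    have inj: "inj_on (\<lambda>y. (x * y) mod P) (carrier ?R)"
    proof (rule inj_onI)
      fix y z assume yz: "y \<in> carrier ?R" "z \<in> carrier ?R" "(x * y) mod P = (x * z) mod P"
      hence "P dvd x * y - x * z" by (simp only: mod_eq_dvd_iff)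
      hence "P dvd x * (y - z)" by (simp only: right_diff_distrib)
      moreover have "\<not> P dvd x" using xd res_dvd_zero by blast
      ultimately have "P dvd y - z" using pf(1) prime_elem_dvd_mult_iff by blast
      moreover have "degree (y - z) < degree P" using yz carr by (auto intro: degree_diff_less)
      ultimately have "y - z = 0" using res_dvd_zero by blast
      thus "y = z" by simp
    qed
    have sub: "(\<lambda>y. (x * y) mod P) ` carrier ?R \<subseteq> carrier ?R" using degmod carr by auto
    have "(\<lambda>y. (x * y) mod P) ` carrier ?R = carrier ?R"
      using fin inj sub by (metis card_image card_subset_eq)
    moreover have "1 \<in> carrier ?R" using pf carr by simp
    ultimately obtain v where v: "v \<in> carrier ?R" "(x * v) mod P = 1" by (metis (no_types, lifting) imageE)
    hence "x * v mod P = 1" "v * x mod P = 1" by (simp_all add: mult.commute)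
    hence "x \<otimes>\<^bsub>?R\<^esub> v = \<one>\<^bsub>?R\<^esub>" "v \<otimes>\<^bsub>?R\<^esub> x = \<one>\<^bsub>?R\<^esub>"
      by (simp_all add: mult.commute)
    moreover note v(1)
    moreover have "x \<in> carrier ?R" using x by blast
    ultimately show "x \<in> Units ?R" unfolding Units_def by blast
  qed
qed

lemma resring_pow:
  fixes P :: "'a::field poly"
  assumes "degree P \<ge> 1"
  shows "x [^]\<^bsub>resring P\<^esub> (n::nat) = x ^ n mod P"
proof (induction n)
  case 0
  thus ?case using assms by (simp add: resring_def res_mod_self)
next
  case (Suc n)
  thus ?case by (simp add: resring_def mod_mult_right_eq mult.commute)
qed

lemma resring_facts:
  fixes P :: "'a::field poly"
  shows "carrier (resring P) = {F. degree F < degree P}" "\<zero>\<^bsub>resring P\<^esub> = 0"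
    "\<one>\<^bsub>resring P\<^esub> = 1"
  by (simp_all add: resring_def)

lemma res_generator:
  fixes P :: "'a::{finite,field} poly"
  assumes P: "prime_poly P"
  shows "\<exists>g. degree g < degree P \<and> g \<noteq> 0 \<and>
            (\<forall>c. degree c < degree P \<and> c \<noteq> 0 \<longrightarrow> (\<exists>i. c = g ^ i mod P))"
proof -
  note pf = prime_poly_facts[OF P]
  interpret field "resring P" by (rule field_resring[OF P])
  have "finite {p::'a poly. degree p < degree P}" using card_deg_less[OF pf(2)] by blast
  hence "finite (carrier (resring P))" by (simp add: resring_facts)
  from finite_field_mult_group_has_gen[OF this] obtain a where
    a: "a \<in> carrier (mult_of (resring P))"
       "carrier (mult_of (resring P)) = {a [^]\<^bsub>resring P\<^esub> i | i::nat. i \<in> UNIV}" by blast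
  show ?thesis
  proof (rule exI[of _ a], intro conjI allI impI)
    show "degree a < degree P" "a \<noteq> 0" using a(1) by (auto simp: resring_facts)
    fix c :: "'a poly" assume "degree c < degree P \<and> c \<noteq> 0"
    hence "c \<in> carrier (mult_of (resring P))" by (simp add: resring_facts)
    then obtain i where "c = a [^]\<^bsub>resring P\<^esub> (i::nat)" using a(2) by blast
    thus "\<exists>i. c = a ^ i mod P" using resring_pow[OF pf(2)] by blast
  qed
qed

lemma res_fermat:
  fixes P c :: "'a::{finite,field} poly"
  assumes P: "prime_poly P" and c: "degree c < degree P" "c \<noteq> 0"
  shows "c ^ (CARD('a) ^ degree P - 1) mod P = 1"
proof -
  note pf = prime_poly_facts[OF P]
  interpret field "resring P" by (rule field_resring[OF P])
  have cd: "finite {p::'a poly. degree p < degree P} \<and> card {p::'a poly. degree p < degree P} = CARD('a) ^ degree P"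
    using card_deg_less[OF pf(2)] by blast
  have U: "Units (resring P) = {p. degree p < degree P} - {0}"
    using field_Units by (simp add: resring_facts)
  have fin: "finite (Units (resring P))" using cd U by simp
  have cardU: "card (Units (resring P)) = CARD('a) ^ degree P - 1"
    using cd U pf by (simp add: card_Diff_singleton)
  have "c \<in> Units (resring P)" using U c by simp
  from units_power_order_eq_one[OF fin this] show ?thesis
    by (simp add: cardU resring_pow[OF pf(2)] resring_facts)
qed

locale cubic_setup =
  fixes P :: "'a::{finite,field} poly" and \<zeta> :: 'a
  assumes P: "prime_poly P" and zeta3: "\<zeta> ^ 3 = 1" and zeta1: "\<zeta> \<noteq> 1"
    and q6: "CARD('a) mod 6 = 1"
begin

lemma pf: "prime_elem P" "degree P \<ge> 1" "P \<noteq> 0"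
  using prime_poly_facts[OF P] by auto

lemma zeta_sum: "1 + \<zeta> + \<zeta>^2 = 0"
proof -
  have "(\<zeta> - 1) * (1 + \<zeta> + \<zeta>^2) = \<zeta>^3 - 1" by (simp add: algebra_simps power2_eq_square power3_eq_cube)
  also have "\<dots> = 0" using zeta3 by simp
  finally show ?thesis using zeta1 by simp
qed

lemma zeta_ne: "\<zeta> \<noteq> 0" "\<zeta>^2 \<noteq> 1" "\<zeta>^2 \<noteq> \<zeta>"
proof -
  show "\<zeta> \<noteq> 0" using zeta3 by auto
  show "\<zeta>^2 \<noteq> 1"
  proof
    assume "\<zeta>^2 = 1"
    hence "\<zeta>^3 = \<zeta>" by (simp add: power3_eq_cube power2_eq_square)
    thus False using zeta3 zeta1 by simp
  qed
  show "\<zeta>^2 \<noteq> \<zeta>"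
  proof
    assume "\<zeta>^2 = \<zeta>"
    hence "\<zeta> * (\<zeta> - 1) = 0" by (simp add: power2_eq_square algebra_simps)
    thus False using zeta3 zeta1 by auto
  qed
qed

lemma zeta_pow_inj: "j < 3 \<Longrightarrow> k < 3 \<Longrightarrow> \<zeta>^j = \<zeta>^k \<Longrightarrow> j = k"
proof -
  assume jk: "j < 3" "k < 3" "\<zeta>^j = \<zeta>^k"
  have "j \<in> {0,1,2}" "k \<in> {0,1,2}" using jk by auto
  thus "j = k" using jk(3) zeta_ne zeta1 by (auto simp: eq_commute[of 1])
qed

lemma cube_factor:
  fixes x y :: "'a poly"
  shows "(x - y) * (x - Polynomial.smult \<zeta> y) * (x - Polynomial.smult (\<zeta>^2) y) = x^3 - y^3"
proof -
  define z where "z = [:\<zeta>:]"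
  have z3: "z^3 = 1" using zeta3 by (simp add: z_def poly_const_pow one_pCons)
  have "1 + z + z^2 = [:1 + \<zeta> + \<zeta>^2:]" by (simp add: z_def poly_const_pow one_pCons)
  hence zs: "1 + z + z^2 = 0" using zeta_sum by simp
  have "Polynomial.smult \<zeta> y = z * y" "Polynomial.smult (\<zeta>^2) y = z^2 * y" by (simp_all add: z_def poly_const_pow)
  hence "(x - y) * (x - Polynomial.smult \<zeta> y) * (x - Polynomial.smult (\<zeta>^2) y) = (x - y) * (x - z*y) * (x - z^2*y)" by simp
  also have "\<dots> = x^3 - (1 + z + z^2) * x^2 * y + z * (1 + z + z^2) * x * y^2 - z^3 * y^3"
    by (simp add: algebra_simps power2_eq_square power3_eq_cube)
  also have "\<dots> = x^3 - y^3" using z3 zs by simp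
  finally show ?thesis .
qed

lemma res_zero: "degree x < degree P \<Longrightarrow> P dvd x \<Longrightarrow> x = 0"
  by (rule res_dvd_zero)

lemma cube_eq:
  fixes x y :: "'a poly"
  assumes x: "degree x < degree P" and y: "degree y < degree P" and e: "x^3 mod P = y^3 mod P"
  shows "x = y \<or> x = Polynomial.smult \<zeta> y \<or> x = Polynomial.smult (\<zeta>^2) y"
proof -
  have "P dvd x^3 - y^3" using e by (simp add: mod_eq_dvd_iff)
  hence "P dvd (x - y) * (x - Polynomial.smult \<zeta> y) * (x - Polynomial.smult (\<zeta>^2) y)" by (simp add: cube_factor)
  hence "P dvd x - y \<or> P dvd x - Polynomial.smult \<zeta> y \<or> P dvd x - Polynomial.smult (\<zeta>^2) y"
    using pf(1) prime_elem_dvd_mult_iff by blast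
  moreover have "degree (x - y) < degree P" "degree (x - Polynomial.smult \<zeta> y) < degree P"
     "degree (x - Polynomial.smult (\<zeta>^2) y) < degree P"
    using x y by (auto intro!: degree_diff_less le_less_trans[OF degree_smult_le])
  ultimately show ?thesis using res_zero by force
qed

lemma cube_zero:
  assumes x: "degree x < degree P" and e: "x^3 mod P = 0"
  shows "x = 0"
proof -
  have "P dvd x^3" using e by (simp add: mod_eq_0_iff_dvd)
  hence "P dvd x" using pf(1) prime_elem_dvd_power by blast
  thus ?thesis using x res_zero by blast
qed

lemma cube_roots:
  assumes c: "c \<noteq> 0" and x0: "degree x0 < degree P" "x0^3 mod P = c"
  shows "{x. degree x < degree P \<and> x^3 mod P = c} = {x0, Polynomial.smult \<zeta> x0, Polynomial.smult (\<zeta>^2) x0}"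
    "card {x. degree x < degree P \<and> x^3 mod P = c} = 3"
proof -
  have x00: "x0 \<noteq> 0" using c x0 by auto
  have pw: "(Polynomial.smult a x0)^3 = Polynomial.smult (a^3) (x0^3)" for a by (simp add: smult_power)
  have z6: "(\<zeta>^2)^3 = 1" using zeta3 by (metis power_mult power_mult_distrib power_one mult.commute power_mult)
  show e: "{x. degree x < degree P \<and> x^3 mod P = c} = {x0, Polynomial.smult \<zeta> x0, Polynomial.smult (\<zeta>^2) x0}"
  proof (intro Set.set_eqI iffI)
    fix x assume "x \<in> {x. degree x < degree P \<and> x^3 mod P = c}"
    thus "x \<in> {x0, Polynomial.smult \<zeta> x0, Polynomial.smult (\<zeta>^2) x0}" using cube_eq[of x x0] x0 by auto
  next
    fix x assume "x \<in> {x0, Polynomial.smult \<zeta> x0, Polynomial.smult (\<zeta>^2) x0}"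
    thus "x \<in> {x. degree x < degree P \<and> x^3 mod P = c}"
      using x0 pw zeta3 z6 by (auto intro: le_less_trans[OF degree_smult_le])
  qed
  have "x0 \<noteq> Polynomial.smult \<zeta> x0" "x0 \<noteq> Polynomial.smult (\<zeta>^2) x0" "Polynomial.smult \<zeta> x0 \<noteq> Polynomial.smult (\<zeta>^2) x0"
  proof -
    have ne: "Polynomial.smult a x0 \<noteq> Polynomial.smult b x0" if "a \<noteq> b" for a b
    proof
      assume "Polynomial.smult a x0 = Polynomial.smult b x0"
      hence "Polynomial.smult (a - b) x0 = 0" by (simp add: smult_diff_left)
      thus False using that x00 by simp
    qed
    show "x0 \<noteq> Polynomial.smult \<zeta> x0" using ne[of 1 \<zeta>] zeta1 by auto
    show "x0 \<noteq> Polynomial.smult (\<zeta>^2) x0" using ne[of 1 "\<zeta>^2"] zeta_ne by auto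
    show "Polynomial.smult \<zeta> x0 \<noteq> Polynomial.smult (\<zeta>^2) x0" using ne[of \<zeta> "\<zeta>^2"] zeta_ne by auto
  qed
  thus "card {x. degree x < degree P \<and> x^3 mod P = c} = 3" unfolding e by simp
qed

abbreviation "Q \<equiv> CARD('a) ^ degree P"
abbreviation "m \<equiv> (CARD('a) ^ degree P - 1) div 3"

lemma Q_facts: "Q mod 3 = 1" "Q - 1 = 3 * m" "m > 0" "Q \<ge> 1"
proof -
  have q3: "CARD('a) mod 3 = 1" using q6 by presburger
  have "Q mod 3 = (CARD('a) mod 3) ^ degree P mod 3" by (simp add: power_mod)
  thus Qm: "Q mod 3 = 1" using q3 by simp
  have "\<And>x::nat. x mod 3 = 1 \<Longrightarrow> x - 1 = 3 * ((x - 1) div 3)" by presburger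
  from this[OF Qm] show "Q - 1 = 3 * m" .
  have "card {0::'a, 1} \<le> CARD('a)" by (rule card_mono) auto
  hence "CARD('a) \<ge> 2" by simp
  hence q7: "CARD('a) \<ge> 7" using q6 by presburger
  have "CARD('a) ^ 1 \<le> Q" using pf(2) q7 by (intro power_increasing) auto
  with q7 have "Q \<ge> 7" by simp
  thus "m > 0" "Q \<ge> 1" by auto
qed

lemma degmod: "degree (x mod P) < degree P"
  using pf degree_mod_less[of P x] by (cases "x mod P = 0") auto

lemma one_res: "degree (1::'a poly) < degree P" "(1::'a poly) mod P = 1"
  using pf by (auto simp: res_mod_self)

lemma nonzero_pow: "degree g < degree P \<Longrightarrow> g \<noteq> 0 \<Longrightarrow> g ^ i mod P \<noteq> 0"
proof
  assume g: "degree g < degree P" "g \<noteq> 0" and "g ^ i mod P = 0"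
  hence "P dvd g ^ i" by (simp add: mod_eq_0_iff_dvd)
  hence "P dvd g" using pf(1) prime_elem_dvd_power by blast
  thus False using g res_zero by blast
qed

lemma fermat: "degree c < degree P \<Longrightarrow> c \<noteq> 0 \<Longrightarrow> c ^ (Q - 1) mod P = 1"
  by (rule res_fermat[OF P])

lemma pow_reduce:
  assumes "degree c < degree P" "c \<noteq> 0"
  shows "c ^ i mod P = c ^ (i mod (Q - 1)) mod P"
proof -
  let ?k = "i div (Q - 1)" and ?r = "i mod (Q - 1)"
  have "c ^ i = c ^ ((Q - 1) * ?k + ?r)" by simp
  also have "\<dots> = (c ^ (Q - 1)) ^ ?k * c ^ ?r" by (simp only: power_add power_mult)
  finally have "c ^ i mod P = ((c ^ (Q - 1)) ^ ?k mod P) * c ^ ?r mod P"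
    by (simp add: mod_mult_left_eq)
  also have "(c ^ (Q - 1)) ^ ?k mod P = (c ^ (Q - 1) mod P) ^ ?k mod P" by (simp add: power_mod)
  also have "\<dots> = 1" using fermat[OF assms] one_res by simp
  finally show ?thesis by simp
qed

lemma card_units: "finite {F::'a poly. degree F < degree P}" "card ({F::'a poly. degree F < degree P} - {0}) = Q - 1"
proof -
  have cd: "finite {p::'a poly. degree p < degree P} \<and> card {p::'a poly. degree p < degree P} = Q"
    using card_deg_less[OF pf(2)] by blast
  thus "finite {F::'a poly. degree F < degree P}" by blast
  show "card ({F::'a poly. degree F < degree P} - {0}) = Q - 1"
    using cd pf by (simp add: card_Diff_singleton)
qed

lemma gen_order:
  assumes g: "degree g < degree P" "g \<noteq> 0"
    and gen: "\<forall>c. degree c < degree P \<and> c \<noteq> 0 \<longrightarrow> (\<exists>i. c = g ^ i mod P)"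
    and j: "g ^ j mod P = 1"
  shows "(Q - 1) dvd j"
proof -
  let ?f = "\<lambda>i. g ^ i mod P"
  have N0: "Q - 1 > 0" using Q_facts by simp
  have "?f ` {..<Q - 1} = {F. degree F < degree P} - {0}"
  proof (intro Set.set_eqI iffI)
    fix c assume "c \<in> ?f ` {..<Q - 1}"
    then obtain i where c: "c = ?f i" by blast
    have "degree c < degree P" "c \<noteq> 0" unfolding c by (rule degmod, rule nonzero_pow[OF g])
    thus "c \<in> {F. degree F < degree P} - {0}" by blast
  next
    fix c :: "'a poly" assume "c \<in> {F. degree F < degree P} - {0}"
    then obtain i where "c = g ^ i mod P" using gen by auto
    hence "c = g ^ (i mod (Q - 1)) mod P" using pow_reduce[OF g] by simp
    moreover have "i mod (Q - 1) < Q - 1" using N0 by simp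
    ultimately show "c \<in> ?f ` {..<Q - 1}" by blast
  qed
  hence "inj_on ?f {..<Q - 1}"
    using card_units by (simp add: eq_card_imp_inj_on)
  moreover have "?f (j mod (Q - 1)) = ?f 0" using j pow_reduce[OF g, of j] one_res by simp
  moreover have "j mod (Q - 1) \<in> {..<Q - 1}" "0 \<in> {..<Q - 1}" using N0 by auto
  ultimately have "j mod (Q - 1) = 0" by (rule inj_onD)
  thus ?thesis by (simp add: mod_eq_0_iff_dvd)
qed

lemma e_cube: "degree c < degree P \<Longrightarrow> c \<noteq> 0 \<Longrightarrow> (c ^ m mod P) ^ 3 mod P = 1"
proof -
  assume c: "degree c < degree P" "c \<noteq> 0"
  have "(c ^ m mod P) ^ 3 mod P = c ^ (m * 3) mod P" by (simp add: power_mod power_mult)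
  also have "m * 3 = Q - 1" using Q_facts by simp
  finally show ?thesis using fermat[OF c] by simp
qed

lemma e_cases:
  assumes c: "degree c < degree P" "c \<noteq> 0"
  shows "c ^ m mod P = [:\<zeta>^0:] \<or> c ^ m mod P = [:\<zeta>^1:] \<or> c ^ m mod P = [:\<zeta>^2:]"
proof -
  have "(c ^ m mod P) ^ 3 mod P = 1 ^ 3 mod P" using e_cube[OF c] one_res by simp
  from cube_eq[OF degmod one_res(1) this] show ?thesis by (simp add: one_pCons)
qed

lemma cube_iff:
  assumes c: "degree c < degree P" "c \<noteq> 0"
  shows "(\<exists>x. degree x < degree P \<and> x ^ 3 mod P = c) \<longleftrightarrow> c ^ m mod P = 1"
proof
  assume "\<exists>x. degree x < degree P \<and> x ^ 3 mod P = c"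
  then obtain x where x: "degree x < degree P" "x ^ 3 mod P = c" by blast
  have x0: "x \<noteq> 0" using x c by auto
  have "c ^ m mod P = x ^ (3 * m) mod P" unfolding x(2)[symmetric] by (simp add: power_mod power_mult)
  also have "3 * m = Q - 1" using Q_facts by simp
  finally show "c ^ m mod P = 1" using fermat[OF x(1) x0] by simp
next
  assume e: "c ^ m mod P = 1"
  obtain g where g: "degree g < degree P" "g \<noteq> 0"
    and gen: "\<forall>c. degree c < degree P \<and> c \<noteq> 0 \<longrightarrow> (\<exists>i. c = g ^ i mod P)"
    using res_generator[OF P] by blast
  obtain k where k: "c = g ^ k mod P" using gen c by blast
  have "g ^ (k * m) mod P = 1" using e unfolding k by (simp add: power_mod power_mult)
  from gen_order[OF g gen this] have "m * 3 dvd m * k" using Q_facts by (simp add: mult.commute)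
  hence "3 dvd k" using Q_facts(3) by (simp add: nat_mult_dvd_cancel_disj)
  then obtain t where t: "k = 3 * t" by blast
  have "(g ^ t mod P) ^ 3 mod P = c" unfolding k t by (simp add: power_mod power_mult mult.commute)
  thus "\<exists>x. degree x < degree P \<and> x ^ 3 mod P = c" using degmod by blast
qed

lemma chi_eval:
  assumes c: "degree c < degree P" "c \<noteq> 0" and j: "j < 3" "c ^ m mod P = [:\<zeta>^j:]"
  shows "cubic_sym \<zeta> P c = cis (2 * pi / 3) ^ j"
proof -
  have nd: "\<not> P dvd c" using c res_zero by blast
  have "(THE w. \<exists>j<(3::nat). w = cis (2 * pi / 3) ^ j \<and> c ^ m mod P = [:\<zeta> ^ j:]) = cis (2 * pi / 3) ^ j"
  proof (rule the_equality)
    show "\<exists>j'<(3::nat). cis (2 * pi / 3) ^ j = cis (2 * pi / 3) ^ j' \<and> c ^ m mod P = [:\<zeta> ^ j':]"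
      using j by blast
  next
    fix w assume "\<exists>j'<(3::nat). w = cis (2 * pi / 3) ^ j' \<and> c ^ m mod P = [:\<zeta> ^ j':]"
    then obtain j' where j': "j' < 3" "w = cis (2 * pi / 3) ^ j'" "c ^ m mod P = [:\<zeta> ^ j':]" by blast
    have "\<zeta> ^ j' = \<zeta> ^ j" using j'(3) j(2) by simp
    hence "j' = j" using zeta_pow_inj j'(1) j(1) by blast
    thus "w = cis (2 * pi / 3) ^ j" using j' by simp
  qed
  thus ?thesis using nd unfolding cubic_sym_def by simp
qed

lemma chi_zero: "cubic_sym \<zeta> P 0 = 0"
  by (simp add: cubic_sym_def)

lemma count_cubes:
  assumes c: "degree c < degree P"
  shows "complex_of_nat (card {x. degree x < degree P \<and> x ^ 3 mod P = c})
           = 1 + cubic_sym \<zeta> P c + cnj (cubic_sym \<zeta> P c)"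
proof (cases "c = 0")
  case True
  have "{x. degree x < degree P \<and> x ^ 3 mod P = c} = {0}"
    using True cube_zero pf by auto
  thus ?thesis using True chi_zero by simp
next
  case False
  show ?thesis
  proof (cases "c ^ m mod P = 1")
    case True
    then obtain x0 where x0: "degree x0 < degree P" "x0 ^ 3 mod P = c" using cube_iff[OF c False] by blast
    have "cubic_sym \<zeta> P c = 1" using chi_eval[OF c False, of 0] True by (simp add: one_pCons)
    thus ?thesis using cube_roots(2)[OF False x0] by simp
  next
    case ne: False
    have e: "{x. degree x < degree P \<and> x ^ 3 mod P = c} = {}" using cube_iff[OF c False] ne by blast
    have "c ^ m mod P = [:\<zeta>^1:] \<or> c ^ m mod P = [:\<zeta>^2:]" using e_cases[OF c False] ne by (auto simp: one_pCons simp del: power_one_right)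
    hence "cubic_sym \<zeta> P c = cis (2 * pi / 3) ^ 1 \<or> cubic_sym \<zeta> P c = cis (2 * pi / 3) ^ 2"
    proof (elim disjE)
      assume "c ^ m mod P = [:\<zeta>^1:]"
      from chi_eval[OF c False _ this] show ?thesis by simp
    next
      assume "c ^ m mod P = [:\<zeta>^2:]"
      from chi_eval[OF c False _ this] show ?thesis by simp
    qed
    moreover have "cis (2 * pi / 3) ^ 2 = cis (pi / 3 + pi)"
    proof -
      have "cis (2 * pi / 3) ^ 2 = cis (2 * pi / 3 + 2 * pi / 3)" by (simp add: power2_eq_square cis_mult)
      also have "2 * pi / 3 + 2 * pi / 3 = pi / 3 + pi" by (simp add: field_simps)
      finally show ?thesis .
    qed
    ultimately have "cubic_sym \<zeta> P c = cis (2 * pi / 3) \<or> cubic_sym \<zeta> P c = cis (pi / 3 + pi)"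
      by auto
    moreover have c43: "cos (pi / 3 + pi) = - 1/2"
      by (simp only: cos_periodic_pi cos_60)
    ultimately have "Re (cubic_sym \<zeta> P c) = -1/2" using cos_120 by (auto simp del: cos_periodic_pi2 cos_periodic_pi)
    hence "1 + cubic_sym \<zeta> P c + cnj (cubic_sym \<zeta> P c) = 0"
      by (simp add: complex_eq_iff)
    thus ?thesis by (simp only: e card.empty of_nat_0)
  qed
qed

end

lemma cubic_sym_mod: "cubic_sym \<zeta> P (F mod P) = cubic_sym \<zeta> P F"
  unfolding cubic_sym_def by (simp add: power_mod dvd_mod_iff)

lemma char_ne:
  assumes "prime CHAR('a::field)" "CHAR('a) \<noteq> 2" "CHAR('a) \<noteq> 3"
  shows "(2::'a) \<noteq> 0" "(3::'a) \<noteq> 0"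
proof -
  have "of_nat 2 \<noteq> (0::'a)"
  proof
    assume "of_nat 2 = (0::'a)"
    hence "CHAR('a) dvd 2" by (simp only: of_nat_eq_0_iff_char_dvd)
    hence "CHAR('a) = 2" using assms(1) primes_dvd_imp_eq[of "CHAR('a)" 2] by simp
    thus False using assms(2) by simp
  qed
  thus "(2::'a) \<noteq> 0" by simp
  have "of_nat 3 \<noteq> (0::'a)"
  proof
    assume "of_nat 3 = (0::'a)"
    hence "CHAR('a) dvd 3" by (simp only: of_nat_eq_0_iff_char_dvd)
    moreover have "prime (3::nat)" by simp
    ultimately have "CHAR('a) = 3" using assms(1) primes_dvd_imp_eq[of "CHAR('a)" 3] by simp
    thus False using assms(3) by simp
  qed
  thus "(3::'a) \<noteq> 0" by simp
qed

context cubic_setup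
begin

lemma point_count:
  assumes B: "\<not> P dvd B" and two: "(2::'a) \<noteq> 0" and three: "(3::'a) \<noteq> 0"
  shows "complex_of_nat (num_points_red B P) =
     of_nat Q + 1 + (\<Sum>y\<in>{F. degree F < degree P}. cubic_sym \<zeta> P (y^2 - B))
       + cnj (\<Sum>y\<in>{F. degree F < degree P}. cubic_sym \<zeta> P (y^2 - B))"
proof -
  let ?RS = "{F::'a poly. degree F < degree P}"
  let ?T = "\<lambda>y. {x. degree x < degree P \<and> x ^ 3 mod P = (y^2 - B) mod P}"
  let ?S = "{(x, y). x \<in> residues_mod P \<and> y \<in> residues_mod P \<and>
                   (y ^ 2 - x ^ 3 - B) mod P = 0 \<and>
                   \<not> ((Polynomial.smult 2 y) mod P = 0 \<and> (Polynomial.smult (-3) (x ^ 2)) mod P = 0)}"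
  have S: "?S = (\<lambda>(y, x). (x, y)) ` (SIGMA y:?RS. ?T y)"
  proof (intro Set.set_eqI iffI)
    fix z assume "z \<in> ?S"
    then obtain x y where z: "z = (x, y)" "degree x < degree P" "degree y < degree P"
      "(y ^ 2 - x ^ 3 - B) mod P = 0" by (auto simp: residues_mod_def)
    have "P dvd y ^ 2 - x ^ 3 - B" using z(4) by (simp add: mod_eq_0_iff_dvd)
    hence "P dvd - (x ^ 3 - (y ^ 2 - B))" by (simp add: algebra_simps)
    hence "P dvd x ^ 3 - (y ^ 2 - B)" by (simp only: dvd_minus_iff)
    hence "x ^ 3 mod P = (y ^ 2 - B) mod P" by (simp only: mod_eq_dvd_iff)
    thus "z \<in> (\<lambda>(y, x). (x, y)) ` (SIGMA y:?RS. ?T y)" using z by force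
  next
    fix z assume "z \<in> (\<lambda>(y, x). (x, y)) ` (SIGMA y:?RS. ?T y)"
    then obtain x y where z: "z = (x, y)" "degree x < degree P" "degree y < degree P"
      "x ^ 3 mod P = (y ^ 2 - B) mod P" by auto
    have "P dvd x ^ 3 - (y ^ 2 - B)" using z(4) by (simp only: mod_eq_dvd_iff)
    hence "P dvd - (x ^ 3 - (y ^ 2 - B))" by (simp only: dvd_minus_iff)
    hence "P dvd y ^ 2 - x ^ 3 - B" by (simp add: algebra_simps)
    hence e: "(y ^ 2 - x ^ 3 - B) mod P = 0" by (simp add: mod_eq_0_iff_dvd)
    have ns: "\<not> ((Polynomial.smult 2 y) mod P = 0 \<and> (Polynomial.smult (-3) (x ^ 2)) mod P = 0)"
    proof
      assume a: "(Polynomial.smult 2 y) mod P = 0 \<and> (Polynomial.smult (-3) (x ^ 2)) mod P = 0"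
      have "P dvd Polynomial.smult 2 y" using a by (simp add: mod_eq_0_iff_dvd)
      hence "P dvd y" using two by (simp add: dvd_smult_iff)
      hence y0: "y = 0" using z(3) res_zero by blast
      have "P dvd Polynomial.smult (-3) (x ^ 2)" using a by (simp add: mod_eq_0_iff_dvd)
      hence "P dvd x ^ 2" using three by (simp add: dvd_smult_iff)
      hence "P dvd x" using pf(1) prime_elem_dvd_power by blast
      hence x0: "x = 0" using z(2) res_zero by blast
      have "P dvd y ^ 2 - x ^ 3 - B" using e by (simp add: mod_eq_0_iff_dvd)
      hence "P dvd B" using x0 y0 by simp
      thus False using B by simp
    qed
    show "z \<in> ?S" using z e ns by (simp add: residues_mod_def)
  qed
  have inj: "inj_on (\<lambda>(y, x). (x, y)) (SIGMA y:?RS. ?T y)" by (auto simp: inj_on_def)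
  have finRS: "finite ?RS" using card_units(1) by blast
  have finT: "finite (?T y)" for y by (rule finite_subset[OF _ finRS]) auto
  have "card ?S = (\<Sum>y\<in>?RS. card (?T y))"
    unfolding S using inj finRS finT by (simp add: card_image)
  hence "complex_of_nat (card ?S) = (\<Sum>y\<in>?RS. complex_of_nat (card (?T y)))" by simp
  also have "\<dots> = (\<Sum>y\<in>?RS. 1 + cubic_sym \<zeta> P (y^2 - B) + cnj (cubic_sym \<zeta> P (y^2 - B)))"
  proof (rule sum.cong[OF refl])
    fix y show "complex_of_nat (card (?T y)) = 1 + cubic_sym \<zeta> P (y^2 - B) + cnj (cubic_sym \<zeta> P (y^2 - B))"
      using count_cubes[OF degmod, of "y^2 - B"] by (simp add: cubic_sym_mod)
  qed
  also have "\<dots> = of_nat (card ?RS) + (\<Sum>y\<in>?RS. cubic_sym \<zeta> P (y^2 - B)) + cnj (\<Sum>y\<in>?RS. cubic_sym \<zeta> P (y^2 - B))"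
    by (simp add: sum.distrib)
  also have "card ?RS = Q" using card_deg_less[OF pf(2)] by blast
  finally have "complex_of_nat (card ?S) = of_nat Q + (\<Sum>y\<in>?RS. cubic_sym \<zeta> P (y^2 - B)) + cnj (\<Sum>y\<in>?RS. cubic_sym \<zeta> P (y^2 - B))" .
  moreover have "num_points_red B P = card ?S + 1" by (simp add: num_points_red_def)
  ultimately show ?thesis by simp
qed

end

theorem lemma4p2:
  fixes B P :: "'a::{finite,field} poly" and \<zeta> :: 'a
  assumes char: "prime CHAR('a)" "CHAR('a) \<noteq> 2" "CHAR('a) \<noteq> 3"
    and q6: "CARD('a) mod 6 = 1"
    and zeta: "\<zeta> ^ 3 = 1" "\<zeta> \<noteq> 1"
    and minB: "minimal_weierstrass_short B"
    and P: "prime_poly P"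
    and good: "good_reduction B P"
  shows "(complex_of_real (a_star B P 1)
           = - (lambda_P \<zeta> B P + cnj (lambda_P \<zeta> B P))) \<and>
         (complex_of_real (a_star B P 2)
           = lambda_P \<zeta> B P ^ 2 + cnj (lambda_P \<zeta> B P) ^ 2
             + 2 * (complex_of_real (cmod (lambda_P \<zeta> B P) ^ 2) - 1)) \<and>
         (complex_of_real (a_star B P 3)
           = - (lambda_P \<zeta> B P ^ 3 + cnj (lambda_P \<zeta> B P) ^ 3)
             - 3 * (complex_of_real (cmod (lambda_P \<zeta> B P) ^ 2) - 1)
                 * (lambda_P \<zeta> B P + cnj (lambda_P \<zeta> B P)))"
proof -
  interpret cubic_setup P \<zeta>
    using P zeta q6 by unfold_locales auto
  let ?d = "degree P"
  let ?S = "sqrt (real CARD('a)) ^ ?d"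
  let ?s = "\<Sum>y\<in>{F::'a poly. degree F < degree P}. cubic_sym \<zeta> P (y^2 - B)"
  let ?l = "lambda_P \<zeta> B P"
  let ?a = "a_coeff B P"
  have nPB: "\<not> P dvd B"
  proof
    assume "P dvd B"
    hence "P dvd disc_short B" unfolding disc_short_def by (intro dvd_smult) (simp add: power2_eq_square)
    thus False using good by (simp add: good_reduction_def)
  qed
  have Spos: "?S > 0" using Q_facts by simp
  have cnt: "complex_of_nat (num_points_red B P) = of_nat Q + 1 + ?s + cnj ?s"
    using point_count[OF nPB char_ne[OF char]] by (simp add: residues_mod_def)
  have l: "?l = complex_of_real (1 / ?S) * ?s"
    by (simp add: lambda_P_def residues_mod_def)
  have "complex_of_real ?a = (of_nat Q + 1 - complex_of_nat (num_points_red B P)) / complex_of_real ?S"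
    by (simp add: a_coeff_def)
  also have "\<dots> = - (?s + cnj ?s) / complex_of_real ?S" using cnt by simp
  also have "\<dots> = - (?l + cnj ?l)" using Spos unfolding l by (simp add: field_simps)
  finally have A: "complex_of_real ?a = - (?l + cnj ?l)" .
  define f where "f = 1 - fps_const ?a * fps_X ^ ?d + fps_X ^ (2 * ?d)"
  have L: "L_local B P = inverse f"
    using good by (simp add: L_local_def f_def good_reduction_def Let_def)
  have d1: "?d \<ge> 1" using pf by simp
  note fp = fps_part[OF d1, of ?a, folded f_def]
  have st: "a_star B P k = fps_nth (fps_deriv (inverse f) * inverse (inverse f)) (k * ?d - 1) / ?d" for k
    by (simp add: a_star_def L)
  have s1: "a_star B P 1 = ?a" using fp(1) d1 by (simp add: st)
  have s2: "a_star B P 2 = ?a^2 - 2" using fp(2) d1 by (simp add: st)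
  have s3: "a_star B P 3 = ?a^3 - 3 * ?a" using fp(3) d1 by (simp add: st)
  have nrm: "complex_of_real (cmod ?l ^ 2) = ?l * cnj ?l" by (rule complex_norm_square)
  show ?thesis
    unfolding nrm unfolding s1 s2 s3 of_real_diff of_real_power of_real_mult of_real_numeral A
    by (simp add: algebra_simps power2_eq_square power3_eq_cube)
qed

end
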